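(* For any simple undirected graph $G$, the number of subgraphs isomorphic to the paw graph is $$n_G(\text{paw})=\sum_{\{st,uv\}\in Q}(a_{su}+a_{tv})(a_{sv}+a_{tu}).$$
   Context: $a_{ij}$ are adjacency matrix entries. $Q$ is the set of unordered pairs $\{st,uv\}$ of edges with $s,t,u,v$ pairwise distinct. The paw graph is a triangle with one pendant edge attached to one of its vertices (4 vertices, 4 edges). $n_G(F)$ counts (not necessarily induced) subgraphs isomorphic to $F$. *)

theory Defs
  imports Main
begin

definition simple_graph :: "'a set \<Rightarrow> 'a set set \<Rightarrow> bool" where
  "simple_graph V E \<longleftrightarrow> finite V \<and>
     E \<subseteq> {{u, v} | u v. u \<in> V \<and> v \<in> V \<and> u \<noteq> v}"

definition adj :: "'a set set \<Rightarrow> 'a \<Rightarrow> 'a \<Rightarrow> nat" where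
  "adj E u v = (if {u, v} \<in> E then 1 else 0)"

definition Qpairs :: "'a set set \<Rightarrow> 'a set set set" where
  "Qpairs E = {{{s, t}, {u, v}} | s t u v.
      {s, t} \<in> E \<and> {u, v} \<in> E \<and> distinct [s, t, u, v]}"

text \<open>The summand (a_su + a_tv)(a_sv + a_tu) for q = {st, uv}; it does not
  depend on the chosen labelling of q.\<close>
definition paw_term :: "'a set set \<Rightarrow> 'a set set \<Rightarrow> nat" where
  "paw_term E q = (SOME r. \<exists>s t u v. q = {{s, t}, {u, v}} \<and> distinct [s, t, u, v] \<and>
      r = (adj E s u + adj E t v) * (adj E s v + adj E t u))"

definition paw_V :: "nat set" where "paw_V = {0, 1, 2, 3}"
definition paw_E :: "nat set set" where
  "paw_E = {{0, 1}, {1, 2}, {0, 2}, {2, 3}}"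

definition is_subgraph :: "'a set \<Rightarrow> 'a set set \<Rightarrow> 'a set \<Rightarrow> 'a set set \<Rightarrow> bool" where
  "is_subgraph W F V E \<longleftrightarrow> W \<subseteq> V \<and> F \<subseteq> E \<and> (\<forall>e\<in>F. e \<subseteq> W)"

definition iso_paw :: "'a set \<Rightarrow> 'a set set \<Rightarrow> bool" where
  "iso_paw W F \<longleftrightarrow> (\<exists>f. bij_betw f paw_V W \<and>
     (\<forall>x\<in>paw_V. \<forall>y\<in>paw_V. {x, y} \<in> paw_E \<longleftrightarrow> {f x, f y} \<in> F))"

text \<open>n_G(paw): number of (not necessarily induced) subgraphs of G isomorphic to paw.\<close>
definition n_paw :: "'a set \<Rightarrow> 'a set set \<Rightarrow> nat" where
  "n_paw V E = card {(W, F). is_subgraph W F V E \<and> iso_paw W F}"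

end

theory Submission
  imports Defs
begin
lemma t17: "inj_on (f::nat\<Rightarrow>'a) paw_V \<Longrightarrow> distinct [f 0, f 1, f 2, f 3]"
  unfolding paw_V_def by (simp add: inj_on_eq_iff)
lemma t20: "\<forall>x\<in>paw_V. \<forall>y\<in>paw_V. {x, y} \<in> paw_E \<longleftrightarrow> {f x, f y} \<in> F \<Longrightarrow> {{f 0, f 1},{f 1, f 2},{f 0, f 2},{f 2, f 3}} \<subseteq> F"
  unfolding paw_V_def paw_E_def by simp
lemma t41: "distinct [a,b,c,d] \<Longrightarrow> bij_betw (\<lambda>i::nat. if i = 0 then a else if i = 1 then b else if i = 2 then c else d) paw_V {a,b,c,d}"
  unfolding bij_betw_def inj_on_def paw_V_def by auto
lemma t_iso: "distinct [a,b,c,d] \<Longrightarrow> f = (\<lambda>i::nat. if i = 0 then a else if i = 1 then b else if i = 2 then c else d) \<Longrightarrow>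
   \<forall>x\<in>paw_V. \<forall>y\<in>paw_V. {x, y} \<in> paw_E \<longleftrightarrow> {f x, f y} \<in> {{a,b},{b,c},{a,c},{c,d}}"
  unfolding paw_V_def paw_E_def using [[simp_depth_limit=100]] by (simp add: doubleton_eq_iff) auto
lemma pawE_cases:
  assumes "i \<in> paw_V" "j \<in> paw_V" "{i,j} \<in> paw_E"
  shows "(i,j) \<in> {(0,1),(1,0),(1,2),(2,1),(0,2),(2,0),(2,3),(3,2)}"
  using assms unfolding paw_V_def paw_E_def by (auto simp: doubleton_eq_iff)
lemma t29: "e = {x,y} \<Longrightarrow> x = f i \<Longrightarrow> y = f j \<Longrightarrow> (i,j) \<in> {(0::nat,1::nat),(1,0),(1,2),(2,1),(0,2),(2,0),(2,3),(3,2)} \<Longrightarrow>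
  e \<in> {{f 0, f 1},{f 1, f 2},{f 0, f 2},{f 2, f 3}}"
  by (auto simp: insert_commute)

lemma paw_char:
  assumes G: "simple_graph V E"
  shows "(is_subgraph W F V E \<and> iso_paw W F) \<longleftrightarrow>
    (\<exists>a b c d. distinct [a,b,c,d] \<and> W = {a,b,c,d} \<and> F = {{a,b},{b,c},{a,c},{c,d}} \<and> F \<subseteq> E)"
proof
  assume H: "is_subgraph W F V E \<and> iso_paw W F"
  then obtain f where bij: "bij_betw f paw_V W" and iso: "\<forall>x\<in>paw_V. \<forall>y\<in>paw_V. {x, y} \<in> paw_E \<longleftrightarrow> {f x, f y} \<in> F"
    unfolding iso_paw_def by blast
  have FE: "F \<subseteq> E" and FW: "\<forall>e\<in>F. e \<subseteq> W" using H unfolding is_subgraph_def by auto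
  have inj: "inj_on f paw_V" and im: "f ` paw_V = W" using bij by (auto simp: bij_betw_def)
  have d: "distinct [f 0, f 1, f 2, f 3]" using t17[OF inj] .
  have W: "W = {f 0, f 1, f 2, f 3}" using im unfolding paw_V_def by auto
  have F1: "{{f 0, f 1},{f 1, f 2},{f 0, f 2},{f 2, f 3}} \<subseteq> F" using t20[OF iso] .
  have F2: "F \<subseteq> {{f 0, f 1},{f 1, f 2},{f 0, f 2},{f 2, f 3}}"
  proof
    fix e assume e: "e \<in> F"
    then obtain x y where exy: "e = {x,y}" "x \<noteq> y" using FE G unfolding simple_graph_def by blast
    have "x \<in> W" "y \<in> W" using FW e exy by auto
    then obtain i j where ij: "i \<in> paw_V" "j \<in> paw_V" "x = f i" "y = f j" using im by auto
    have "{f i, f j} \<in> F" using e exy ij by simp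
    then have "{i,j} \<in> paw_E" using iso ij(1,2) by blast
    from pawE_cases[OF ij(1,2) this] show "e \<in> {{f 0, f 1},{f 1, f 2},{f 0, f 2},{f 2, f 3}}"
      by (rule t29[OF exy(1) ij(3,4)])
  qed
  have "F = {{f 0, f 1},{f 1, f 2},{f 0, f 2},{f 2, f 3}}" using subset_antisym[OF F2 F1] .
  show "\<exists>a b c d. distinct [a,b,c,d] \<and> W = {a,b,c,d} \<and> F = {{a,b},{b,c},{a,c},{c,d}} \<and> F \<subseteq> E"
  proof (intro exI conjI)
    show "distinct [f 0, f 1, f 2, f 3]" by (rule d)
    show "W = {f 0, f 1, f 2, f 3}" by (rule W)
    show "F = {{f 0, f 1},{f 1, f 2},{f 0, f 2},{f 2, f 3}}" by fact
    show "F \<subseteq> E" by (rule FE)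
  qed
next
  assume "\<exists>a b c d. distinct [a,b,c,d] \<and> W = {a,b,c,d} \<and> F = {{a,b},{b,c},{a,c},{c,d}} \<and> F \<subseteq> E"
  then obtain a b c d where d: "distinct [a,b,c,d]" and W: "W = {a,b,c,d}"
    and F: "F = {{a,b},{b,c},{a,c},{c,d}}" and FE: "F \<subseteq> E" by (elim exE conjE) (rule that)
  have EV: "\<And>e. e \<in> E \<Longrightarrow> e \<subseteq> V" using G unfolding simple_graph_def by auto
  have "{a,b} \<subseteq> V" "{c,d} \<subseteq> V" using EV[of "{a,b}"] EV[of "{c,d}"] FE F by auto
  then have "W \<subseteq> V" unfolding W by simp
  moreover have "\<forall>e\<in>F. e \<subseteq> W" unfolding F W by simp
  ultimately have sub: "is_subgraph W F V E" using FE unfolding is_subgraph_def by simp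
  have "iso_paw W F" unfolding iso_paw_def W F
    by (rule exI, rule conjI, rule t41[OF d], rule t_iso[OF d refl])
  then show "is_subgraph W F V E \<and> iso_paw W F" using sub by blast
qed

definition gsep :: "'a set set \<Rightarrow> 'a set set" where
  "gsep F = {e\<in>F. \<exists>e'\<in>F. e \<inter> e' = {}}"

lemma gsep_paw: "distinct [a,b,c,d] \<Longrightarrow> gsep {{a,b},{b,c},{a,c},{c,d}} = {{a,b},{c,d}}"
  unfolding gsep_def by auto

lemma adj_sym: "adj E x y = adj E y x"
  unfolding adj_def by (simp add: insert_commute)

lemma term_indep:
  assumes "{{s,t},{u,v}} = {{s',t'},{u',v'}}" "distinct [s,t,u,v]"
  shows "(adj E s u + adj E t v) * (adj E s v + adj E t u) = (adj E s' u' + adj E t' v') * (adj E s' v' + adj E t' u')"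
  using assms by (auto simp: doubleton_eq_iff adj_sym algebra_simps)

lemma paw_term_eq:
  assumes "distinct [s,t,u,v]"
  shows "paw_term E {{s,t},{u,v}} = (adj E s u + adj E t v) * (adj E s v + adj E t u)"
  unfolding paw_term_def
proof (rule someI2)
  show "\<exists>s' t' u' v'. {{s,t},{u,v}} = {{s', t'}, {u', v'}} \<and> distinct [s', t', u', v'] \<and>
      (adj E s u + adj E t v) * (adj E s v + adj E t u) = (adj E s' u' + adj E t' v') * (adj E s' v' + adj E t' u')"
    using assms by blast
next
  fix r assume "\<exists>s' t' u' v'. {{s,t},{u,v}} = {{s', t'}, {u', v'}} \<and> distinct [s', t', u', v'] \<and>
      r = (adj E s' u' + adj E t' v') * (adj E s' v' + adj E t' u')"
  then obtain s' t' u' v' where "{{s,t},{u,v}} = {{s', t'}, {u', v'}}" 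
     "r = (adj E s' u' + adj E t' v') * (adj E s' v' + adj E t' u')" by blast
  then show "r = (adj E s u + adj E t v) * (adj E s v + adj E t u)"
    using term_indep[OF _ assms, of s' t' u' v' E] by simp
qed

lemma card_pair_filter:
  assumes "x \<noteq> y"
  shows "card {e\<in>{x,y}. e \<in> E} = (if x \<in> E then 1 else 0) + (if y \<in> E then 1 else 0)"
proof -
  have "{e\<in>{x,y}. e \<in> E} = (if x \<in> E then {x} else {}) \<union> (if y \<in> E then {y} else {})" by auto
  then show ?thesis using assms by (cases "x \<in> E"; cases "y \<in> E") auto
qed

definition Rp :: "'a set set \<Rightarrow> 'a \<Rightarrow> 'a \<Rightarrow> 'a \<Rightarrow> 'a \<Rightarrow> 'a set \<Rightarrow> 'a set set \<Rightarrow> bool" where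
  "Rp E s t u v W F \<longleftrightarrow> W = {s,t,u,v} \<and> (\<exists>e1 e2. e1 \<in> {e\<in>{{s,u},{t,v}}. e\<in>E} \<and>
      e2 \<in> {e\<in>{{s,v},{t,u}}. e\<in>E} \<and> F = {{s,t},{u,v},e1,e2})"

lemma Rp_swap1: "Rp E s t u v W F \<Longrightarrow> Rp E t s u v W F"
  unfolding Rp_def
proof (elim conjE exE)
  fix e1 e2 assume W: "W = {s,t,u,v}" and e: "e1 \<in> {e\<in>{{s,u},{t,v}}. e\<in>E}"
      "e2 \<in> {e\<in>{{s,v},{t,u}}. e\<in>E}" and F: "F = {{s,t},{u,v},e1,e2}"
  show "W = {t,s,u,v} \<and> (\<exists>e1 e2. e1 \<in> {e\<in>{{t,u},{s,v}}. e\<in>E} \<and>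
      e2 \<in> {e\<in>{{t,v},{s,u}}. e\<in>E} \<and> F = {{t,s},{u,v},e1,e2})"
  proof (intro conjI exI)
    show "W = {t,s,u,v}" using W by (simp add: insert_commute)
    show "e2 \<in> {e\<in>{{t,u},{s,v}}. e\<in>E}" using e by auto
    show "e1 \<in> {e\<in>{{t,v},{s,u}}. e\<in>E}" using e by auto
    show "F = {{t,s},{u,v},e2,e1}" using F by (simp add: insert_commute)
  qed
qed

lemma Rp_swap2: "Rp E s t u v W F \<Longrightarrow> Rp E u v s t W F"
  unfolding Rp_def
proof (elim conjE exE)
  fix e1 e2 assume W: "W = {s,t,u,v}" and e: "e1 \<in> {e\<in>{{s,u},{t,v}}. e\<in>E}"
      "e2 \<in> {e\<in>{{s,v},{t,u}}. e\<in>E}" and F: "F = {{s,t},{u,v},e1,e2}"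
  show "W = {u,v,s,t} \<and> (\<exists>e1 e2. e1 \<in> {e\<in>{{u,s},{v,t}}. e\<in>E} \<and>
      e2 \<in> {e\<in>{{u,t},{v,s}}. e\<in>E} \<and> F = {{u,v},{s,t},e1,e2})"
  proof (intro conjI exI)
    show "W = {u,v,s,t}" using W by (simp add: insert_commute)
    show "e1 \<in> {e\<in>{{u,s},{v,t}}. e\<in>E}" using e by (auto simp: insert_commute)
    show "e2 \<in> {e\<in>{{u,t},{v,s}}. e\<in>E}" using e by (auto simp: insert_commute)
    show "F = {{u,v},{s,t},e1,e2}" using F by (simp add: insert_commute)
  qed
qed

lemma Rp_swap3: "Rp E s t u v W F \<Longrightarrow> Rp E s t v u W F"
  by (drule Rp_swap2, drule Rp_swap1, drule Rp_swap2)

lemma Rp_base: "Rp E a b c d {a,b,c,d} {{a,b},{b,c},{a,c},{c,d}}" if "{{a,b},{b,c},{a,c},{c,d}} \<subseteq> E"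
  unfolding Rp_def
proof (intro conjI exI)
  show "{a,b,c,d} = {a,b,c,d}" by simp
  show "{a,c} \<in> {e\<in>{{a,c},{b,d}}. e\<in>E}" using that by auto
  show "{b,c} \<in> {e\<in>{{a,d},{b,c}}. e\<in>E}" using that by auto
  show "{{a,b},{b,c},{a,c},{c,d}} = {{a,b},{c,d},{a,c},{b,c}}" by (simp add: insert_commute)
qed

lemma Rp_pair:
  assumes "Rp E a b c d W F" "{a,b} = {s,t}" "{c,d} = {u,v}"
  shows "Rp E s t u v W F"
proof -
  have 1: "(a = s \<and> b = t) \<or> (a = t \<and> b = s)" using assms(2) by (simp add: doubleton_eq_iff)
  have 2: "(c = u \<and> d = v) \<or> (c = v \<and> d = u)" using assms(3) by (simp add: doubleton_eq_iff)
  from 1 2 assms(1) show ?thesis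
    using Rp_swap1 Rp_swap3 by metis
qed

lemma Rp_q:
  assumes "Rp E a b c d W F" "{{a,b},{c,d}} = {{s,t},{u,v}}"
  shows "Rp E s t u v W F"
proof -
  have "({a,b} = {s,t} \<and> {c,d} = {u,v}) \<or> ({a,b} = {u,v} \<and> {c,d} = {s,t})"
    using assms(2) doubleton_eq_iff[of "{a,b}" "{c,d}" "{s,t}" "{u,v}"] by blast
  then show ?thesis
  proof
    assume "{a,b} = {s,t} \<and> {c,d} = {u,v}"
    then show ?thesis using Rp_pair[OF assms(1)] by blast
  next
    assume "{a,b} = {u,v} \<and> {c,d} = {s,t}"
    then have "Rp E u v s t W F" using Rp_pair[OF assms(1)] by blast
    then show ?thesis by (rule Rp_swap2)
  qed
qed

lemma mk_paw:
  assumes G: "simple_graph V E" and d: "distinct [a,b,c,d]" and FE: "{{a,b},{b,c},{a,c},{c,d}} \<subseteq> E"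
  shows "is_subgraph {a,b,c,d} {{a,b},{b,c},{a,c},{c,d}} V E \<and> iso_paw {a,b,c,d} {{a,b},{b,c},{a,c},{c,d}}
     \<and> gsep {{a,b},{b,c},{a,c},{c,d}} = {{a,b},{c,d}}"
proof -
  have 1: "is_subgraph {a,b,c,d} {{a,b},{b,c},{a,c},{c,d}} V E \<and> iso_paw {a,b,c,d} {{a,b},{b,c},{a,c},{c,d}}"
    by (rule paw_char[OF G, THEN iffD2], rule exI[of _ a], rule exI[of _ b], rule exI[of _ c], rule exI[of _ d])
      (use d FE in simp)
  show ?thesis by (intro conjI conjunct1[OF 1] conjunct2[OF 1] gsep_paw[OF d])
qed

lemma Rp_to_paw:
  assumes G: "simple_graph V E" and d: "distinct [s,t,u,v]" and st: "{s,t} \<in> E" and uv: "{u,v} \<in> E"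
    and R: "Rp E s t u v W F"
  shows "is_subgraph W F V E \<and> iso_paw W F \<and> gsep F = {{s,t},{u,v}}"
proof -
  obtain e1 e2 where W: "W = {s,t,u,v}" and e1: "e1 \<in> {e\<in>{{s,u},{t,v}}. e\<in>E}"
      and e2: "e2 \<in> {e\<in>{{s,v},{t,u}}. e\<in>E}" and F: "F = {{s,t},{u,v},e1,e2}"
    using R unfolding Rp_def by (elim conjE exE) (rule that; assumption)
  from e1 have e1c: "e1 = {s,u} \<or> e1 = {t,v}" and e1E: "e1 \<in> E" by auto
  from e2 have e2c: "e2 = {s,v} \<or> e2 = {t,u}" and e2E: "e2 \<in> E" by auto
  from e1c e2c show ?thesis
  proof (elim disjE)
    assume h: "e1 = {s,u}" "e2 = {s,v}"
    have "distinct [u,v,s,t]" using d by auto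
    from mk_paw[OF G this] have "is_subgraph {u,v,s,t} {{u,v},{v,s},{u,s},{s,t}} V E \<and> iso_paw {u,v,s,t} {{u,v},{v,s},{u,s},{s,t}}
     \<and> gsep {{u,v},{v,s},{u,s},{s,t}} = {{u,v},{s,t}}"
      using st uv e1E e2E h by (simp add: insert_commute)
    then show ?thesis using W F h by (simp add: insert_commute)
  next
    assume h: "e1 = {s,u}" "e2 = {t,u}"
    have "distinct [s,t,u,v]" using d by auto
    from mk_paw[OF G this] have "is_subgraph {s,t,u,v} {{s,t},{t,u},{s,u},{u,v}} V E \<and> iso_paw {s,t,u,v} {{s,t},{t,u},{s,u},{u,v}}
     \<and> gsep {{s,t},{t,u},{s,u},{u,v}} = {{s,t},{u,v}}"
      using st uv e1E e2E h by (simp add: insert_commute)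
    then show ?thesis using W F h by (simp add: insert_commute)
  next
    assume h: "e1 = {t,v}" "e2 = {s,v}"
    have "distinct [s,t,v,u]" using d by auto
    from mk_paw[OF G this] have "is_subgraph {s,t,v,u} {{s,t},{t,v},{s,v},{v,u}} V E \<and> iso_paw {s,t,v,u} {{s,t},{t,v},{s,v},{v,u}}
     \<and> gsep {{s,t},{t,v},{s,v},{v,u}} = {{s,t},{v,u}}"
      using st uv e1E e2E h by (simp add: insert_commute)
    then show ?thesis using W F h by (simp add: insert_commute)
  next
    assume h: "e1 = {t,v}" "e2 = {t,u}"
    have "distinct [u,v,t,s]" using d by auto
    from mk_paw[OF G this] have "is_subgraph {u,v,t,s} {{u,v},{v,t},{u,t},{t,s}} V E \<and> iso_paw {u,v,t,s} {{u,v},{v,t},{u,t},{t,s}}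
     \<and> gsep {{u,v},{v,t},{u,t},{t,s}} = {{u,v},{t,s}}"
      using st uv e1E e2E h by (simp add: insert_commute)
    then show ?thesis using W F h by (simp add: insert_commute)
  qed
qed

lemma paw_to_Rp:
  assumes G: "simple_graph V E" and P: "is_subgraph W F V E \<and> iso_paw W F" and g: "gsep F = {{s,t},{u,v}}"
  shows "Rp E s t u v W F"
proof -
  obtain a b c d where d: "distinct [a,b,c,d]" and W: "W = {a,b,c,d}"
    and F: "F = {{a,b},{b,c},{a,c},{c,d}}" and FE: "F \<subseteq> E"
    using iffD1[OF paw_char[OF G] P] by (elim exE conjE) (rule that; assumption)
  have "Rp E a b c d W F" unfolding W F by (rule Rp_base) (use FE F in simp)
  moreover have "{{a,b},{c,d}} = {{s,t},{u,v}}" using g gsep_paw[OF d] F by simp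
  ultimately show ?thesis by (rule Rp_q)
qed

lemma fib_eq:
  assumes G: "simple_graph V E" and d: "distinct [s,t,u,v]" and st: "{s,t} \<in> E" and uv: "{u,v} \<in> E"
  shows "{p \<in> {(W,F). is_subgraph W F V E \<and> iso_paw W F}. gsep (snd p) = {{s,t},{u,v}}}
    = (\<lambda>(e1,e2). ({s,t,u,v}, {{s,t},{u,v},e1,e2})) ` ({e\<in>{{s,u},{t,v}}. e\<in>E} \<times> {e\<in>{{s,v},{t,u}}. e\<in>E})"
    (is "?L = ?h ` (?A \<times> ?B)")
proof (intro equalityI subsetI)
  fix p assume "p \<in> ?L"
  obtain W F where p: "p = (W,F)" by (cases p)
  have P: "is_subgraph W F V E \<and> iso_paw W F" and g: "gsep F = {{s,t},{u,v}}"
    using \<open>p \<in> ?L\<close> unfolding p by simp_all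
  have "Rp E s t u v W F" by (rule paw_to_Rp[OF G P g])
  then obtain e1 e2 where "W = {s,t,u,v}" "e1 \<in> ?A" "e2 \<in> ?B" "F = {{s,t},{u,v},e1,e2}"
    unfolding Rp_def by (elim conjE exE) (rule that; assumption)
  then have "p = ?h (e1,e2)" "(e1,e2) \<in> ?A \<times> ?B" using p by simp_all
  then show "p \<in> ?h ` (?A \<times> ?B)" by (rule image_eqI)
next
  fix p assume "p \<in> ?h ` (?A \<times> ?B)"
  then obtain x where x: "x \<in> ?A \<times> ?B" "p = ?h x" by (rule imageE)
  obtain e1 e2 where x12: "x = (e1,e2)" by (cases x)
  have e: "e1 \<in> ?A" "e2 \<in> ?B" using x(1) unfolding x12 by auto
  have p: "p = ({s,t,u,v}, {{s,t},{u,v},e1,e2})" using x(2) unfolding x12 by simp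
  have "Rp E s t u v {s,t,u,v} {{s,t},{u,v},e1,e2}" unfolding Rp_def
    by (intro conjI refl exI[of _ e1] exI[of _ e2] e)
  from Rp_to_paw[OF G d st uv this] show "p \<in> ?L" using p by simp
qed

lemma fib_card:
  assumes G: "simple_graph V E" and d: "distinct [s,t,u,v]" and st: "{s,t} \<in> E" and uv: "{u,v} \<in> E"
  shows "card {p \<in> {(W,F). is_subgraph W F V E \<and> iso_paw W F}. gsep (snd p) = {{s,t},{u,v}}}
    = (adj E s u + adj E t v) * (adj E s v + adj E t u)"
proof -
  let ?A = "{e\<in>{{s,u},{t,v}}. e\<in>E}" and ?B = "{e\<in>{{s,v},{t,u}}. e\<in>E}"
  let ?h = "\<lambda>(e1,e2). ({s,t,u,v}, {{s,t},{u,v},e1,e2})"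
  have ne: "{s,u} \<noteq> {t,v}" "{s,v} \<noteq> {t,u}" "{s,u} \<noteq> {s,t}" "{s,u} \<noteq> {u,v}"
     "{t,v} \<noteq> {s,t}" "{t,v} \<noteq> {u,v}" "{s,v} \<noteq> {s,t}" "{s,v} \<noteq> {u,v}"
     "{t,u} \<noteq> {s,t}" "{t,u} \<noteq> {u,v}" "{s,u} \<noteq> {s,v}" "{s,u} \<noteq> {t,u}"
     "{t,v} \<noteq> {s,v}" "{t,v} \<noteq> {t,u}"
    using d by (simp_all add: doubleton_eq_iff) blast+
  have inj: "inj_on ?h (?A \<times> ?B)"
  proof (rule inj_onI)
    fix x y assume x: "x \<in> ?A \<times> ?B" and y: "y \<in> ?A \<times> ?B" and h: "?h x = ?h y"
    obtain e1 e2 where x12: "x = (e1,e2)" by (cases x)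
    obtain e1' e2' where y12: "y = (e1',e2')" by (cases y)
    have a1: "e1 = {s,u} \<or> e1 = {t,v}" "e2 = {s,v} \<or> e2 = {t,u}" using x unfolding x12 by auto
    have a2: "e1' = {s,u} \<or> e1' = {t,v}" "e2' = {s,v} \<or> e2' = {t,u}" using y unfolding y12 by auto
    have eq: "{{s,t},{u,v},e1,e2} = {{s,t},{u,v},e1',e2'}" using h unfolding x12 y12 by simp
    have "e1 \<in> {{s,t},{u,v},e1',e2'}" using eq by blast
    then have "e1 = {s,t} \<or> e1 = {u,v} \<or> e1 = e1' \<or> e1 = e2'" by simp
    then have 1: "e1 = e1'" using a1 a2 ne by metis
    have "e2 \<in> {{s,t},{u,v},e1',e2'}" using eq by blast
    then have "e2 = {s,t} \<or> e2 = {u,v} \<or> e2 = e1' \<or> e2 = e2'" by simp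
    then have 2: "e2 = e2'" using a1 a2 ne by metis
    show "x = y" unfolding x12 y12 using 1 2 by simp
  qed
  have "card ?A = adj E s u + adj E t v"
    using card_pair_filter[OF ne(1), of E] unfolding adj_def by simp
  moreover have "card ?B = adj E s v + adj E t u"
    using card_pair_filter[OF ne(2), of E] unfolding adj_def by simp
  ultimately show ?thesis
    unfolding fib_eq[OF G d st uv] card_image[OF inj] card_cartesian_product by simp
qed

theorem proposition3:
  fixes V :: "'a set" and E :: "'a set set"
  assumes "simple_graph V E"
  shows "n_paw V E = (\<Sum>q\<in>Qpairs E. paw_term E q)"
proof -
  note G = assms
  let ?P = "{(W,F). is_subgraph W F V E \<and> iso_paw W F}"
  let ?fib = "\<lambda>q. {p \<in> ?P. gsep (snd p) = q}"
  have finV: "finite V" using G unfolding simple_graph_def by simp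
  have EV: "E \<subseteq> Pow V" using G unfolding simple_graph_def by auto
  have finE: "finite E" using finite_subset[OF EV] finV by simp
  have finQ: "finite (Qpairs E)"
    by (rule finite_subset[of _ "Pow E"]) (auto simp: Qpairs_def finE)
  have "?P \<subseteq> Pow V \<times> Pow E" unfolding is_subgraph_def by auto
  then have finP: "finite ?P" by (rule finite_subset) (simp add: finV finE)
  have Pun: "?P = (\<Union>q\<in>Qpairs E. ?fib q)"
  proof (intro equalityI subsetI)
    fix p assume pP: "p \<in> ?P"
    obtain W F where p: "p = (W,F)" by (cases p)
    have P: "is_subgraph W F V E \<and> iso_paw W F" using pP unfolding p by simp
    obtain a b c d where d: "distinct [a,b,c,d]" and W: "W = {a,b,c,d}"
      and F: "F = {{a,b},{b,c},{a,c},{c,d}}" and FE: "F \<subseteq> E"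
      using iffD1[OF paw_char[OF G] P] by (elim exE conjE) (rule that; assumption)
    have g: "gsep F = {{a,b},{c,d}}" using gsep_paw[OF d] F by simp
    have "{{a,b},{c,d}} \<in> Qpairs E" unfolding Qpairs_def mem_Collect_eq
      by (intro exI[of _ a] exI[of _ b] exI[of _ c] exI[of _ d]) (use d FE F in simp)
    then show "p \<in> (\<Union>q\<in>Qpairs E. ?fib q)" by (rule UN_I) (use pP p g in simp)
  qed blast
  have "n_paw V E = card ?P" unfolding n_paw_def by (rule refl)
  also have "\<dots> = card (\<Union>q\<in>Qpairs E. ?fib q)" by (rule arg_cong[OF Pun])
  also have "\<dots> = (\<Sum>q\<in>Qpairs E. card (?fib q))"
    by (rule card_UN_disjoint) (use finQ finP in auto)
  also have "\<dots> = (\<Sum>q\<in>Qpairs E. paw_term E q)"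
  proof (rule sum.cong[OF refl])
    fix q assume "q \<in> Qpairs E"
    then obtain s t u v where q: "q = {{s,t},{u,v}}" and st: "{s,t} \<in> E" and uv: "{u,v} \<in> E"
       and d: "distinct [s,t,u,v]"
      unfolding Qpairs_def by (elim CollectE exE conjE) (rule that; assumption)
    show "card (?fib q) = paw_term E q"
      unfolding q fib_card[OF G d st uv] paw_term_eq[OF d] ..
  qed
  finally show ?thesis .
qed

end
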